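(* In the Popularity Adjusted Block Model described in the context, suppose $\operatorname{rank}(\boldsymbol\Theta)=K^2$, and let $\boldsymbol\Xi=(\xi_{iu})\in\mathbb R^{n\times K^2}$ be a matrix whose columns are orthonormal eigenvectors of $\boldsymbol\Theta$ corresponding to its $K^2$ nonzero eigenvalues. For $k\in[K]$ let $\boldsymbol\Xi^{(k)}=(\xi_{iu})_{i:\boldsymbol c^\ast(i)=k,\,u\in[K^2]}$ and $\boldsymbol\Lambda^{(k,\cdot)}=(\lambda_{il})_{i:\boldsymbol c^\ast(i)=k,\,l\in[K]}$. Then for each $k\in[K]$, $$\boldsymbol\Xi^{(k)}=\boldsymbol\Lambda^{(k,\cdot)}\boldsymbol Z_k,$$ where $\boldsymbol Z_k\in\mathbb R^{K\times K^2}$ satisfies $\boldsymbol Z_k\boldsymbol Z_l^\top=\boldsymbol 0_{K\times K}$ for each $l\ne k$ and $\boldsymbol Z_k\boldsymbol Z_k^\top=(\boldsymbol\Lambda^{(k,\cdot)\top}\boldsymbol\Lambda^{(k,\cdot)})^{-1}$.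
   Context: Notation: $[m]=\{1,\dots,m\}$. Popularity Adjusted Block Model: integers $n$, $K\ge2$, a community label vector $\boldsymbol c^\ast\in[K]^n$, a popularity matrix $\boldsymbol\Lambda=(\lambda_{ik})\in[0,1]^{n\times K}$. The edge probability matrix is $\boldsymbol\Theta=(\theta_{ij})_{n\times n}$ with $\theta_{ij}=\lambda_{i\boldsymbol c^\ast(j)}\lambda_{j\boldsymbol c^\ast(i)}$ for all $i,j\in[n]$ (a symmetric matrix). Submatrices indexed by "$i:\boldsymbol c^\ast(i)=k$" keep the rows $i$ with $\boldsymbol c^\ast(i)=k$ in increasing order of $i$. *)

theory Defs
  imports "Jordan_Normal_Form.DL_Rank" "Jordan_Normal_Form.DL_Submatrix" "Jordan_Normal_Form.Char_Poly"
begin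

text \<open>Conventions: indices are 0-based, so [n] becomes {0..<n} and [K] becomes {0..<K}.
  The PABM edge probability matrix built from labels c and popularity matrix Lam.\<close>

definition pabm_Theta :: "nat \<Rightarrow> (nat \<Rightarrow> nat) \<Rightarrow> real mat \<Rightarrow> real mat" where
  "pabm_Theta n c Lam = mat n n (\<lambda>(i,j). Lam $$ (i, c j) * Lam $$ (j, c i))"

definition mat_rank :: "nat \<Rightarrow> real mat \<Rightarrow> nat" where
  "mat_rank n A = vec_space.rank n A"

end

theory Submission
  imports Defs
begin

lemma sum_pair: fixes m K :: nat shows "(\<Sum>v<m*K. f v) = (\<Sum>a<m. \<Sum>b<K. f (a*K+b))"
proof -
  have "(\<Sum>v<m*K. f v) = (\<Sum>a<m. sum f {a*K..<a*K+K})" using sum.nat_group[of f K m] by simp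
  also have "\<dots> = (\<Sum>a<m. \<Sum>b<K. f (a*K+b))"
  proof (rule sum.cong[OF refl])
    fix a
    have "sum f {a*K..<a*K+K} = sum f {0+a*K..<K+a*K}" by (simp add: add.commute)
    also have "\<dots> = (\<Sum>b=0..<K. f (b + a*K))" by (rule sum.shift_bounds_nat_ivl)
    finally show "sum f {a*K..<a*K+K} = (\<Sum>b<K. f (a*K+b))" by (simp add: atLeast0LessThan add.commute)
  qed
  finally show ?thesis .
qed

lemma mult_entry:
  assumes "A \<in> carrier_mat a b" "B \<in> carrier_mat b d" "i < a" "j < d"
  shows "(A*B) $$ (i,j) = (\<Sum>v<b. A$$(i,v) * B$$(v,j))"
  using assms by (simp add: scalar_prod_def atLeast0LessThan)

lemma pick_ivl: "j < M \<Longrightarrow> pick {0..<M} j = j"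
proof -
  assume j: "j < M"
  have "card {a\<in>{0..<M}. a < j} = j"
  proof -
    have "{a\<in>{0..<M}. a < j} = {0..<j}" using j by auto
    thus ?thesis by simp
  qed
  moreover have "pick {0..<M} (card {a\<in>{0..<M}. a < j}) = j"
    by (rule pick_card_in_set) (use j in auto)
  ultimately show ?thesis by simp
qed

lemma pick_props:
  assumes "r < card {i. i<n \<and> i\<in>S}"
  shows "pick S r < n" "pick S r \<in> S"
proof -
  have e: "pick S r = pick {i. i<n \<and> i\<in>S} r" by (rule pick_reduce_set[OF assms])
  have "pick {i. i<n \<and> i\<in>S} r \<in> {i. i<n \<and> i\<in>S}" by (rule pick_in_set_le[OF assms])
  thus "pick S r < n" "pick S r \<in> S" using e by auto
qed

lemma sum_pick:
  "(\<Sum>r<card {i. i<n \<and> i\<in>S}. f (pick S r)) = (\<Sum>i\<in>{i. i<n \<and> i\<in>S}. f i)"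
proof -
  let ?S = "{i. i<n \<and> i\<in>S}"
  have fin: "finite ?S" by auto
  have e: "\<And>r. r \<in> {..<card ?S} \<Longrightarrow> pick S r = pick ?S r"
    by (rule pick_reduce_set) auto
  have inj: "inj_on (pick ?S) {..<card ?S}"
  proof (rule inj_onI)
    fix x y assume x: "x \<in> {..<card ?S}" and y: "y \<in> {..<card ?S}" and eq: "pick ?S x = pick ?S y"
    show "x = y"
    proof (rule ccontr)
      assume "x \<noteq> y"
      then consider "x < y" | "y < x" by linarith
      thus False
      proof cases
        case 1 then show False using pick_mono_le[of y ?S x] y eq by auto
      next
        case 2 then show False using pick_mono_le[of x ?S y] x eq by auto
      qed
    qed
  qed
  have sub: "pick ?S ` {..<card ?S} \<subseteq> ?S"
    using pick_in_set_le[of _ ?S] by auto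
  have img: "pick ?S ` {..<card ?S} = ?S"
    by (rule card_subset_eq[OF fin sub]) (simp add: card_image[OF inj])
  have "(\<Sum>r<card ?S. f (pick S r)) = (\<Sum>r<card ?S. f (pick ?S r))"
    by (rule sum.cong[OF refl]) (simp add: e)
  also have "\<dots> = (\<Sum>i\<in>pick ?S ` {..<card ?S}. f i)"
    by (rule sum.reindex[OF inj, symmetric, simplified comp_def])
  also have "\<dots> = (\<Sum>i\<in>?S. f i)" by (simp add: img)
  finally show ?thesis .
qed

lemma main_aux:
  fixes n K :: nat and c :: "nat \<Rightarrow> nat" and Lam Xi :: "real mat" and mu :: "nat \<Rightarrow> real"
  assumes K2: "K \<ge> 2"
    and c_range: "\<forall>i<n. c i < K"
    and Lam_dim: "Lam \<in> carrier_mat n K"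
    and Xi_dim: "Xi \<in> carrier_mat n (K^2)"
    and Xi_orth: "\<forall>u<K^2. \<forall>v<K^2. col Xi u \<bullet> col Xi v = (if u = v then 1 else 0)"
    and Xi_eig: "\<forall>u<K^2. mu u \<noteq> 0 \<and> eigenvector (pabm_Theta n c Lam) (col Xi u) (mu u)"
  shows "\<exists>Z :: nat \<Rightarrow> real mat. \<forall>k<K.
           Z k \<in> carrier_mat K (K^2)
         \<and> submatrix Xi {i. c i = k} {0..<K^2} = submatrix Lam {i. c i = k} {0..<K} * Z k
         \<and> (\<forall>l<K. l \<noteq> k \<longrightarrow> Z k * (Z l)\<^sup>T = 0\<^sub>m K K)
         \<and> inverts_mat (Z k * (Z k)\<^sup>T) ((submatrix Lam {i. c i = k} {0..<K})\<^sup>T * submatrix Lam {i. c i = k} {0..<K})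
         \<and> inverts_mat ((submatrix Lam {i. c i = k} {0..<K})\<^sup>T * submatrix Lam {i. c i = k} {0..<K}) (Z k * (Z k)\<^sup>T)"
proof -
  define N where "N = K*K"
  have KN: "K^2 = N" unfolding N_def by (simp add: power2_eq_square)
  have Kpos: "K > 0" using K2 by simp
  have dm: "\<And>a b. b < K \<Longrightarrow> (a*K+b) div K = a" "\<And>a b. b < K \<Longrightarrow> (a*K+b) mod K = b"
    using Kpos by auto
  have encN: "\<And>a b. a < K \<Longrightarrow> b < K \<Longrightarrow> a*K+b < N"
  proof -
    fix a b :: nat assume "a < K" "b < K"
    hence "a*K+b < a*K + K" by simp
    also have "\<dots> = (a+1)*K" by simp
    also have "\<dots> \<le> K*K" using \<open>a<K\<close> mult_le_mono1[of "a+1" K K] by linarith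
    finally show "a*K+b < N" unfolding N_def .
  qed
  have enc_inj: "\<And>a b a' b'. b < K \<Longrightarrow> b' < K \<Longrightarrow> (a*K+b = a'*K+b') = (a = a' \<and> b = b')"
    using dm by metis
  define Th where "Th = pabm_Theta n c Lam"
  define A where "A = mat n N (\<lambda>(i,v). if c i = v div K then Lam $$ (i, v mod K) else 0)"
  define Bt where "Bt = mat N n (\<lambda>(v,j). if c j = v mod K then Lam $$ (j, v div K) else 0)"
  define Minv where "Minv = mat N N (\<lambda>(u,v). if u = v then 1 / mu u else 0)"
  define W where "W = Bt * Xi * Minv"
  define D where "D = A\<^sup>T * A"
  define G where "G = W * W\<^sup>T"
  have A: "A \<in> carrier_mat n N" unfolding A_def by simp
  have Bt: "Bt \<in> carrier_mat N n" unfolding Bt_def by simp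
  have Minv: "Minv \<in> carrier_mat N N" unfolding Minv_def by simp
  have Xi: "Xi \<in> carrier_mat n N" using Xi_dim KN by simp
  have Th: "Th \<in> carrier_mat n n" unfolding Th_def pabm_Theta_def by simp
  have W: "W \<in> carrier_mat N N" unfolding W_def using Bt Xi Minv by simp
  have D: "D \<in> carrier_mat N N" unfolding D_def using A by simp
  have G: "G \<in> carrier_mat N N" unfolding G_def using W by simp
  have Lent: "\<And>i l. i < n \<Longrightarrow> l < K \<Longrightarrow> Lam $$ (i,l) = Lam $$ (i,l)" by simp
  have ThAB: "Th = A * Bt"
  proof (rule eq_matI)
    fix i j assume "i < dim_row (A*Bt)" "j < dim_col (A*Bt)"
    hence i: "i < n" and j: "j < n" using A Bt by auto
    have ci: "c i < K" and cj: "c j < K" using c_range i j by auto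
    have "(A*Bt) $$ (i,j) = (\<Sum>v<K*K. A$$(i,v) * Bt$$(v,j))"
      using mult_entry[OF A Bt i j] N_def by simp
    also have "\<dots> = (\<Sum>a<K. \<Sum>b<K. A$$(i,a*K+b) * Bt$$(a*K+b,j))" by (rule sum_pair)
    also have "\<dots> = (\<Sum>a<K. (if a = c i then Lam$$(i,c j) * Lam$$(j,a) else 0))"
    proof (rule sum.cong[OF refl])
      fix a assume a: "a \<in> {..<K}"
      have "(\<Sum>b<K. A$$(i,a*K+b) * Bt$$(a*K+b,j)) = (\<Sum>b<K. (if a = c i then (if b = c j then Lam$$(i,b) * Lam$$(j,a) else 0) else 0))"
        by (rule sum.cong[OF refl]) (use a in \<open>auto simp: A_def Bt_def encN i j dm\<close>)
      also have "\<dots> = (if a = c i then Lam$$(i,c j) * Lam$$(j,a) else 0)"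
        using cj by (cases "a = c i") (simp_all add: sum.delta')
      finally show "(\<Sum>b<K. A$$(i,a*K+b) * Bt$$(a*K+b,j)) = (if a = c i then Lam$$(i,c j) * Lam$$(j,a) else 0)" .
    qed
    also have "\<dots> = Lam$$(i,c j) * Lam$$(j,c i)" using ci by (simp add: sum.delta')
    also have "\<dots> = Th $$ (i,j)" unfolding Th_def pabm_Theta_def using i j by simp
    finally show "Th $$ (i,j) = (A*Bt) $$ (i,j)" by simp
  qed (use A Bt Th in auto)
  have XiTh: "Xi = Th * Xi * Minv"
  proof (rule eq_matI)
    fix i u assume "i < dim_row (Th * Xi * Minv)" "u < dim_col (Th * Xi * Minv)"
    hence i: "i < n" and u: "u < N" using Th Minv by auto
    have ev: "Th *\<^sub>v col Xi u = mu u \<cdot>\<^sub>v col Xi u" and mu: "mu u \<noteq> 0"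
      using Xi_eig u KN unfolding eigenvector_def Th_def by auto
    have TX: "(Th * Xi) $$ (i,v) = mu v * Xi $$ (i,v)" if v: "v < N" for v
    proof -
      have ev: "Th *\<^sub>v col Xi v = mu v \<cdot>\<^sub>v col Xi v"
        using Xi_eig v KN unfolding eigenvector_def Th_def by auto
      have "(Th * Xi) $$ (i,v) = (Th *\<^sub>v col Xi v) $ i" using Th Xi i v by simp
      also have "\<dots> = mu v * Xi $$ (i,v)" using ev Xi i v by simp
      finally show ?thesis .
    qed
    have "(Th * Xi * Minv) $$ (i,u) = (\<Sum>v<N. (Th*Xi)$$(i,v) * Minv$$(v,u))"
      by (rule mult_entry[OF _ Minv i u]) (use Th Xi in simp)
    also have "\<dots> = (\<Sum>v<N. if v = u then (Th*Xi)$$(i,v) / mu u else 0)"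
      by (rule sum.cong[OF refl]) (simp add: Minv_def u)
    also have "\<dots> = (Th*Xi)$$(i,u) / mu u" using u by simp
    also have "\<dots> = Xi $$ (i,u)" using TX[OF u] mu by simp
    finally show "Xi $$ (i,u) = (Th * Xi * Minv) $$ (i,u)" by simp
  qed (use Th Xi Minv in auto)
  have XiAW: "Xi = A * W"
  proof -
    have "Xi = A * Bt * Xi * Minv" using XiTh ThAB by simp
    also have "\<dots> = A * (Bt * Xi * Minv)"
      using A Bt Xi Minv by (simp add: assoc_mult_mat[of _ n N _ N])
    finally show ?thesis unfolding W_def .
  qed
  have XtX: "Xi\<^sup>T * Xi = 1\<^sub>m N"
  proof (rule eq_matI)
    fix u v assume "u < dim_row (1\<^sub>m N :: real mat)" "v < dim_col (1\<^sub>m N :: real mat)"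
    hence u: "u < N" and v: "v < N" by auto
    have "(Xi\<^sup>T * Xi) $$ (u,v) = col Xi u \<bullet> col Xi v" using Xi u v by simp
    also have "\<dots> = (if u = v then 1 else 0)" using Xi_orth u v KN by simp
    finally show "(Xi\<^sup>T * Xi) $$ (u,v) = (1\<^sub>m N :: real mat) $$ (u,v)" using u v by simp
  qed (use Xi in auto)
  have WDW: "W\<^sup>T * (D * W) = 1\<^sub>m N"
  proof -
    have "W\<^sup>T * (D * W) = W\<^sup>T * (A\<^sup>T * (A * W))"
      unfolding D_def using A W by (simp add: assoc_mult_mat[of _ N n _ N])
    also have "\<dots> = (W\<^sup>T * A\<^sup>T) * (A * W)"
      using A W assoc_mult_mat[of "W\<^sup>T" N N "A\<^sup>T" n "A*W" N] by simp
    also have "\<dots> = (A * W)\<^sup>T * (A * W)" using A W by (simp add: transpose_mult)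
    finally show ?thesis using XtX XiAW by simp
  qed
  have "(D * W) * W\<^sup>T = 1\<^sub>m N"
    by (rule mat_mult_left_right_inverse[OF _ _ WDW]) (use D W in auto)
  hence DG: "D * G = 1\<^sub>m N" unfolding G_def using D W by (simp add: assoc_mult_mat[of _ N N _ N])
  have GD: "G * D = 1\<^sub>m N"
    by (rule mat_mult_left_right_inverse[OF D G DG])
  define Ls where "Ls k = submatrix Lam {i. c i = k} {0..<K}" for k
  define mk where "mk k = card {i. i<n \<and> i \<in> {i. c i = k}}" for k
  define Bk where "Bk k = (Ls k)\<^sup>T * Ls k" for k
  define Gb where "Gb k m = mat K K (\<lambda>(l,l'). G$$(k*K+l, m*K+l'))" for k m
  define Z where "Z k = mat K N (\<lambda>(l,u). W$$(k*K+l,u))" for k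
  have colK: "card {j. j < K \<and> j \<in> {0..<K}} = K"
  proof -
    have "{j. j < K \<and> j \<in> {0..<K}} = {0..<K}" by auto
    thus ?thesis by simp
  qed
  have colN: "card {j. j < N \<and> j \<in> {0..<N}} = N"
  proof -
    have "{j. j < N \<and> j \<in> {0..<N}} = {0..<N}" by auto
    thus ?thesis by simp
  qed
  have Ls: "Ls k \<in> carrier_mat (mk k) K" for k
  proof -
    have dr: "dim_row Lam = n" and dc: "dim_col Lam = K" using Lam_dim by auto
    show ?thesis unfolding Ls_def mk_def
      by (rule carrier_matI) (simp_all only: dim_submatrix dr dc colK)
  qed
  have Ls_ent: "Ls k $$ (r,l) = Lam $$ (pick {i. c i = k} r, l)" if "r < mk k" "l < K" for k r l
    unfolding Ls_def using that Lam_dim colK pick_ivl[of l K]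
    by (subst submatrix_index) (auto simp: mk_def)
  have Bk: "Bk k \<in> carrier_mat K K" for k unfolding Bk_def using Ls[of k] by simp
  have Bk_ent: "Bk k $$ (l,l') = (\<Sum>i\<in>{i. i<n \<and> i\<in>{i. c i=k}}. Lam$$(i,l)*Lam$$(i,l'))"
    if l: "l < K" and l': "l' < K" for k l l'
  proof -
    have "Bk k $$ (l,l') = (\<Sum>r<mk k. (Ls k)\<^sup>T $$ (l,r) * Ls k $$ (r,l'))"
      unfolding Bk_def by (rule mult_entry[OF _ Ls l l']) (use Ls[of k] in simp)
    also have "\<dots> = (\<Sum>r<mk k. Lam $$ (pick {i. c i = k} r, l) * Lam $$ (pick {i. c i = k} r, l'))"
      by (rule sum.cong[OF refl]) (use Ls[of k] l l' Ls_ent in simp)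
    also have "\<dots> = (\<Sum>i\<in>{i. i<n \<and> i\<in>{i. c i=k}}. Lam$$(i,l)*Lam$$(i,l'))"
      unfolding mk_def by (rule sum_pick)
    finally show ?thesis .
  qed
  have D_ent: "D $$ (k*K+l, a*K+b) = (if a = k then Bk k $$ (l,b) else 0)"
    if k: "k < K" and l: "l < K" and a: "a < K" and b: "b < K" for k l a b
  proof -
    have "D $$ (k*K+l, a*K+b) = (\<Sum>i<n. A\<^sup>T $$ (k*K+l,i) * A $$ (i,a*K+b))"
      unfolding D_def by (rule mult_entry[OF _ A]) (use A encN k l a b in auto)
    also have "\<dots> = (\<Sum>i<n. if c i = k \<and> c i = a then Lam$$(i,l)*Lam$$(i,b) else 0)"
      by (rule sum.cong[OF refl]) (use A encN k l a b dm in \<open>auto simp: A_def\<close>)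
    also have "\<dots> = (if a = k then Bk k $$ (l,b) else 0)"
    proof (cases "a = k")
      case True
      have "(\<Sum>i<n. if c i = k \<and> c i = a then Lam$$(i,l)*Lam$$(i,b) else 0)
          = (\<Sum>i<n. if c i = k then Lam$$(i,l)*Lam$$(i,b) else 0)" using True by simp
      also have "\<dots> = (\<Sum>i\<in>{x\<in>{..<n}. c x = k}. Lam$$(i,l)*Lam$$(i,b))"
        by (rule sum.inter_filter[symmetric]) simp
      also have "{x\<in>{..<n}. c x = k} = {i. i<n \<and> i\<in>{i. c i=k}}" by auto
      finally show ?thesis using True Bk_ent[OF l b] by simp
    next
      case False
      then show ?thesis by auto
    qed
    finally show ?thesis .
  qed
  have ZZ: "Z k * (Z m)\<^sup>T = Gb k m" if k: "k < K" and m: "m < K" for k m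
  proof (rule eq_matI)
    fix l l' assume "l < dim_row (Gb k m)" "l' < dim_col (Gb k m)"
    hence l: "l < K" and l': "l' < K" unfolding Gb_def by auto
    have "(Z k * (Z m)\<^sup>T) $$ (l,l') = (\<Sum>u<N. W$$(k*K+l,u) * W$$(m*K+l',u))"
      by (subst mult_entry[of _ K N _ K]) (auto simp: Z_def l l')
    also have "\<dots> = G $$ (k*K+l, m*K+l')"
      unfolding G_def using W encN k m l l' by (subst mult_entry[of _ N N _ N]) auto
    finally show "(Z k * (Z m)\<^sup>T) $$ (l,l') = Gb k m $$ (l,l')" unfolding Gb_def using l l' by simp
  qed (auto simp: Z_def Gb_def)
  have BG: "Bk k * Gb k m = (if k = m then 1\<^sub>m K else 0\<^sub>m K K)" if k: "k < K" and m: "m < K" for k m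
  proof (rule eq_matI)
    fix l l' assume "l < dim_row (if k = m then 1\<^sub>m K else 0\<^sub>m K K :: real mat)"
      "l' < dim_col (if k = m then 1\<^sub>m K else 0\<^sub>m K K :: real mat)"
    hence l: "l < K" and l': "l' < K" by (auto split: if_splits)
    have "(Bk k * Gb k m) $$ (l,l') = (\<Sum>b<K. Bk k $$ (l,b) * G$$(k*K+b, m*K+l'))"
      by (subst mult_entry[OF Bk, of _ K]) (auto simp: Gb_def l l')
    also have "\<dots> = (\<Sum>a<K. if a = k then (\<Sum>b<K. Bk k $$ (l,b) * G$$(k*K+b, m*K+l')) else 0)"
      using k by (simp add: sum.delta')
    also have "\<dots> = (\<Sum>a<K. \<Sum>b<K. D $$ (k*K+l, a*K+b) * G$$(a*K+b, m*K+l'))"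
      by (rule sum.cong[OF refl]) (auto simp: D_ent k l)
    also have "\<dots> = (\<Sum>v<K*K. D $$ (k*K+l, v) * G$$(v, m*K+l'))" by (rule sum_pair[symmetric])
    also have "\<dots> = (D * G) $$ (k*K+l, m*K+l')"
      by (rule mult_entry[OF D G, symmetric, unfolded N_def]) (use encN k l m l' N_def in auto)
    also have "\<dots> = (if k = m \<and> l = l' then 1 else 0)" using DG encN k l m l' enc_inj by simp
    finally show "(Bk k * Gb k m) $$ (l,l') = (if k = m then 1\<^sub>m K else 0\<^sub>m K K :: real mat) $$ (l,l')"
      using l l' by auto
  qed (auto simp: Gb_def Bk[THEN carrier_matD(1)] Bk[THEN carrier_matD(2)])
  have GB: "Gb k m * Bk m = (if k = m then 1\<^sub>m K else 0\<^sub>m K K)" if k: "k < K" and m: "m < K" for k m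
  proof (rule eq_matI)
    fix l l' assume "l < dim_row (if k = m then 1\<^sub>m K else 0\<^sub>m K K :: real mat)"
      "l' < dim_col (if k = m then 1\<^sub>m K else 0\<^sub>m K K :: real mat)"
    hence l: "l < K" and l': "l' < K" by (auto split: if_splits)
    have "(Gb k m * Bk m) $$ (l,l') = (\<Sum>b<K. G$$(k*K+l, m*K+b) * Bk m $$ (b,l'))"
      by (subst mult_entry[of _ K K _ K]) (auto simp: Gb_def l l' Bk)
    also have "\<dots> = (\<Sum>a<K. if a = m then (\<Sum>b<K. G$$(k*K+l, m*K+b) * Bk m $$ (b,l')) else 0)"
      using m by (simp add: sum.delta')
    also have "\<dots> = (\<Sum>a<K. \<Sum>b<K. G$$(k*K+l, a*K+b) * D $$ (a*K+b, m*K+l'))"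
      by (rule sum.cong[OF refl]) (auto simp: D_ent m l')
    also have "\<dots> = (\<Sum>v<K*K. G$$(k*K+l, v) * D $$ (v, m*K+l'))" by (rule sum_pair[symmetric])
    also have "\<dots> = (G * D) $$ (k*K+l, m*K+l')"
      by (rule mult_entry[OF G D, symmetric, unfolded N_def]) (use encN k l m l' N_def in auto)
    also have "\<dots> = (if k = m \<and> l = l' then 1 else 0)" using GD encN k l m l' enc_inj by simp
    finally show "(Gb k m * Bk m) $$ (l,l') = (if k = m then 1\<^sub>m K else 0\<^sub>m K K :: real mat) $$ (l,l')"
      using l l' by auto
  qed (auto simp: Gb_def Bk[THEN carrier_matD(1)] Bk[THEN carrier_matD(2)])
  have Gb: "Gb k m \<in> carrier_mat K K" for k m unfolding Gb_def by simp
  have Z: "Z k \<in> carrier_mat K N" for k unfolding Z_def by simp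
  have XiZ: "submatrix Xi {i. c i = k} {0..<N} = Ls k * Z k" if k: "k < K" for k
  proof (rule eq_matI)
    show "dim_row (submatrix Xi {i. c i = k} {0..<N}) = dim_row (Ls k * Z k)"
      using Ls[of k] Xi by (simp add: dim_submatrix mk_def)
    show "dim_col (submatrix Xi {i. c i = k} {0..<N}) = dim_col (Ls k * Z k)"
      using Z[of k] Xi colN by (simp add: dim_submatrix)
    fix r u assume "r < dim_row (Ls k * Z k)" "u < dim_col (Ls k * Z k)"
    hence r: "r < mk k" and u: "u < N" using Ls[of k] Z[of k] by auto
    define p where "p = pick {i. c i = k} r"
    have p: "p < n" "c p = k" using pick_props[of r n "{i. c i = k}"] r unfolding p_def mk_def by auto
    have "submatrix Xi {i. c i = k} {0..<N} $$ (r,u) = Xi $$ (p,u)"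
      unfolding p_def using r u Xi colN pick_ivl[of u N] by (subst submatrix_index) (auto simp: mk_def)
    also have "\<dots> = (\<Sum>v<K*K. A$$(p,v) * W$$(v,u))"
      using XiAW mult_entry[OF A W p(1) u] N_def by simp
    also have "\<dots> = (\<Sum>a<K. \<Sum>b<K. A$$(p,a*K+b) * W$$(a*K+b,u))" by (rule sum_pair)
    also have "\<dots> = (\<Sum>a<K. if a = k then (\<Sum>b<K. Lam$$(p,b) * W$$(k*K+b,u)) else 0)"
      by (rule sum.cong[OF refl]) (auto simp: A_def encN p dm)
    also have "\<dots> = (\<Sum>b<K. Lam$$(p,b) * W$$(k*K+b,u))" using k by (simp add: sum.delta')
    also have "\<dots> = (Ls k * Z k) $$ (r,u)"
      by (subst mult_entry[OF Ls Z r u]) (auto intro!: sum.cong simp: Ls_ent r Z_def u p_def)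
    finally show "submatrix Xi {i. c i = k} {0..<N} $$ (r,u) = (Ls k * Z k) $$ (r,u)" .
  qed
  show ?thesis
  proof (intro exI[of _ Z] allI impI conjI)
    fix k assume k: "k < K"
    show "Z k \<in> carrier_mat K (K^2)" using Z KN by simp
    show "submatrix Xi {i. c i = k} {0..<K^2} = submatrix Lam {i. c i = k} {0..<K} * Z k"
      using XiZ[OF k] KN unfolding Ls_def by simp
    show "Z k * (Z l)\<^sup>T = 0\<^sub>m K K" if "l < K" "l \<noteq> k" for l
    proof -
      have "Gb k l = (Gb k k * Bk k) * Gb k l" using GB[OF k k] Gb[of k l] by simp
      also have "\<dots> = Gb k k * (Bk k * Gb k l)" by (rule assoc_mult_mat[OF Gb Bk Gb])
      also have "\<dots> = 0\<^sub>m K K" using BG[OF k that(1)] that(2) Gb[of k k] by simp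
      finally show ?thesis using ZZ[OF k that(1)] by simp
    qed
    show "inverts_mat (Z k * (Z k)\<^sup>T) ((submatrix Lam {i. c i = k} {0..<K})\<^sup>T * submatrix Lam {i. c i = k} {0..<K})"
      unfolding inverts_mat_def using ZZ[OF k k] GB[OF k k] Gb[of k k] unfolding Bk_def Ls_def by simp
    show "inverts_mat ((submatrix Lam {i. c i = k} {0..<K})\<^sup>T * submatrix Lam {i. c i = k} {0..<K}) (Z k * (Z k)\<^sup>T)"
      unfolding inverts_mat_def using ZZ[OF k k] BG[OF k k] Bk[of k] Ls[of k, unfolded Ls_def] unfolding Bk_def Ls_def by simp
  qed
qed

theorem proposition1:
  fixes n K :: nat and c :: "nat \<Rightarrow> nat" and Lam Xi :: "real mat" and mu :: "nat \<Rightarrow> real"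
  assumes K2: "K \<ge> 2"
    and c_range: "\<forall>i<n. c i < K"
    and Lam_dim: "Lam \<in> carrier_mat n K"
    and Lam_range: "\<forall>i<n. \<forall>l<K. 0 \<le> Lam $$ (i,l) \<and> Lam $$ (i,l) \<le> 1"
    and rank: "mat_rank n (pabm_Theta n c Lam) = K^2"
    and Xi_dim: "Xi \<in> carrier_mat n (K^2)"
    and Xi_orth: "\<forall>u<K^2. \<forall>v<K^2. col Xi u \<bullet> col Xi v = (if u = v then 1 else 0)"
    and Xi_eig: "\<forall>u<K^2. mu u \<noteq> 0 \<and> eigenvector (pabm_Theta n c Lam) (col Xi u) (mu u)"
  shows "\<exists>Z :: nat \<Rightarrow> real mat. \<forall>k<K.
           Z k \<in> carrier_mat K (K^2)
         \<and> submatrix Xi {i. c i = k} {0..<K^2} = submatrix Lam {i. c i = k} {0..<K} * Z k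
         \<and> (\<forall>l<K. l \<noteq> k \<longrightarrow> Z k * (Z l)\<^sup>T = 0\<^sub>m K K)
         \<and> inverts_mat (Z k * (Z k)\<^sup>T) ((submatrix Lam {i. c i = k} {0..<K})\<^sup>T * submatrix Lam {i. c i = k} {0..<K})
         \<and> inverts_mat ((submatrix Lam {i. c i = k} {0..<K})\<^sup>T * submatrix Lam {i. c i = k} {0..<K}) (Z k * (Z k)\<^sup>T)"
  using main_aux[OF K2 c_range Lam_dim Xi_dim Xi_orth Xi_eig] .

end
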